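(* Let $K^{(1)},K^{(2)}$ be independent fractal percolations on $I=[0,1]$ with the same parameters $M\in\mathbb{N}_{\geq2}$ and $p\in(0,1]$, with construction steps $K_n^{(i)}$, and let $D_n^{(i)}:=\overline{I\setminus K_n^{(i)}}$. Then for any $n\in\mathbb{N}_0$, $\mathbb{E}V_1(D_n^{(1)}\cap D_n^{(2)})=1-2p^n+p^{2n}$, $$\mathbb{E}V_0(D_n^{(1)}\cap D_n^{(2)})=2(Mp)^n\left(1-p\frac{M-1}{M-p}\left[1-\left(\frac pM\right)^n\right]\right)+1-4p^n+2p^{2n}+(Mp^2)^n\left(-1+p^2\frac{M-1}{M-p^2}\left[1-\left(\frac{p^2}{M}\right)^n\right]\right),$$ $\mathbb{E}V_1(D_n^{(1)})=1-p^n$, and $$\mathbb{E}V_0(D_n^{(1)})=(Mp)^n\left(1-p\frac{M-1}{M-p}\left[1-\left(\frac pM\right)^n\right]\right)+1-2p^n.$$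
   Context: Fractal percolation on $[0,1]$: $K_0=[0,1]$; given $K_{n-1}$, a union of closed grid intervals of length $M^{-(n-1)}$, each is divided into $M$ closed subintervals of length $M^{-n}$, each kept independently (of everything else) with probability $p$; $K_n$ is the union of kept subintervals. $\overline{A}$ denotes closure; $V_1$ is length and $V_0$ the number of connected components. *)

theory Defs
  imports "HOL-Probability.Probability"
begin

text \<open>Coins of the fractal percolation up to level n: one Bernoulli(p) coin for each
  pair (k, j) with 1 \<le> k \<le> n and j < M^k, i.e. for each grid interval
  [j/M^k, (j+1)/M^k] of level k.\<close>
definition coin_set :: "nat \<Rightarrow> nat \<Rightarrow> (nat \<times> nat) set" where
  "coin_set M n = {(k, j). 1 \<le> k \<and> k \<le> n \<and> j < M ^ k}"

definition perc_pmf :: "nat \<Rightarrow> real \<Rightarrow> nat \<Rightarrow> (nat \<times> nat \<Rightarrow> bool) pmf" where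
  "perc_pmf M p n = Pi_pmf (coin_set M n) False (\<lambda>_. bernoulli_pmf p)"

text \<open>The level-k interval with index j survives iff it and all its ancestors were kept;
  its ancestor at level l \<le> k has index j div M^(k-l).\<close>
definition kept :: "nat \<Rightarrow> (nat \<times> nat \<Rightarrow> bool) \<Rightarrow> nat \<Rightarrow> nat \<Rightarrow> bool" where
  "kept M \<omega> k j = (\<forall>l\<in>{1..k}. \<omega> (l, j div M ^ (k - l)))"

definition perc_K :: "nat \<Rightarrow> nat \<Rightarrow> (nat \<times> nat \<Rightarrow> bool) \<Rightarrow> real set" where
  "perc_K M n \<omega> = (\<Union>j\<in>{j. j < M ^ n \<and> kept M \<omega> n j}.
      {real j / real M ^ n .. (real j + 1) / real M ^ n})"

definition perc_D :: "nat \<Rightarrow> nat \<Rightarrow> (nat \<times> nat \<Rightarrow> bool) \<Rightarrow> real set" where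
  "perc_D M n \<omega> = closure ({0..1} - perc_K M n \<omega>)"

definition V1 :: "real set \<Rightarrow> real" where
  "V1 A = measure lborel A"

definition V0 :: "real set \<Rightarrow> real" where
  "V0 A = real (card (components A))"

end

theory Submission
  imports Defs
begin


lemma conn_left_sub:
  fixes T D :: "real set"
  assumes T: "T \<subseteq> {..a}" "a \<in> T" and D: "connected D" "D \<subseteq> T \<union> {a..b}" "a \<in> D"
  shows "D \<inter> {..a} \<subseteq> connected_component_set T a"
proof (rule connected_component_maximal)
  show "a \<in> D \<inter> {..a}" using D by auto
  show "connected (D \<inter> {..a})" using D(1) unfolding connected_iff_interval by auto
  show "D \<inter> {..a} \<subseteq> T" using D T by auto
qed

lemma conn_sub_merge:
  fixes T D :: "real set"
  assumes T: "T \<subseteq> {..a}" "a \<in> T" and D: "connected D" "D \<subseteq> T \<union> {a..b}" "a \<in> D"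
  shows "D \<subseteq> connected_component_set T a \<union> {a..b}"
proof
  fix x assume x: "x \<in> D"
  show "x \<in> connected_component_set T a \<union> {a..b}"
  proof (cases "x \<le> a")
    case True then show ?thesis using conn_left_sub[OF T D] x by auto
  next
    case False then show ?thesis using x D T by auto
  qed
qed

lemma components_merge:
  fixes T :: "real set"
  assumes T: "T \<subseteq> {..a}" "a \<in> T" and ab: "a \<le> b"
  shows "components (T \<union> {a..b}) = insert (connected_component_set T a \<union> {a..b})
            (components T - {connected_component_set T a})"
proof -
  define C0 where "C0 = connected_component_set T a"
  have C0c: "C0 \<in> components T" unfolding C0_def using T by (simp add: componentsI)
  have aC0: "a \<in> C0" unfolding C0_def using T by simp
  have C0T: "C0 \<subseteq> T" unfolding C0_def by (simp add: connected_component_subset)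
  have conX: "connected (C0 \<union> {a..b})"
    by (rule connected_Un) (use aC0 ab C0c in \<open>auto intro: in_components_connected\<close>)
  have X: "C0 \<union> {a..b} \<in> components (T \<union> {a..b})"
    unfolding in_components_maximal
  proof (intro conjI allI impI)
    show "C0 \<union> {a..b} \<noteq> {}" using aC0 by auto
    show "C0 \<union> {a..b} \<subseteq> T \<union> {a..b}" using C0T by auto
    show "connected (C0 \<union> {a..b})" by (fact conX)
    fix D assume D: "D \<noteq> {} \<and> C0 \<union> {a..b} \<subseteq> D \<and> D \<subseteq> T \<union> {a..b} \<and> connected D"
    have aD: "a \<in> D" using D ab by auto
    have "D \<subseteq> C0 \<union> {a..b}" unfolding C0_def using conn_sub_merge[OF T, of D b] D aD by auto
    then show "D = C0 \<union> {a..b}" using D by auto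
  qed
  have Y: "C1 \<in> components (T \<union> {a..b})" if C1: "C1 \<in> components T" "C1 \<noteq> C0" for C1
    unfolding in_components_maximal
  proof (intro conjI allI impI)
    show "C1 \<noteq> {}" using C1 in_components_nonempty by auto
    show "C1 \<subseteq> T \<union> {a..b}" using C1 in_components_subset by auto
    show "connected C1" using C1 in_components_connected by auto
    fix D assume D: "D \<noteq> {} \<and> C1 \<subseteq> D \<and> D \<subseteq> T \<union> {a..b} \<and> connected D"
    obtain c where c: "c \<in> C1" using C1 in_components_nonempty by auto
    have cT: "c \<in> T" using c C1 in_components_subset by auto
    have aD: "a \<notin> D"
    proof
      assume aD: "a \<in> D"
      have "C1 \<subseteq> D \<inter> {..a}" using D C1(1) in_components_subset T by blast
      also have "\<dots> \<subseteq> C0" unfolding C0_def using conn_left_sub[OF T, of D b] D aD by auto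
      finally have "C1 \<inter> C0 \<noteq> {}" using c by auto
      then show False using components_eq[OF C1(1) C0c] C1(2) by auto
    qed
    have "D \<subseteq> T"
    proof
      fix x assume x: "x \<in> D"
      show "x \<in> T"
      proof (rule ccontr)
        assume "x \<notin> T"
        then have "a < x" using x D aD by force
        moreover have "c \<le> a" using cT T by auto
        moreover have "c \<in> D" using c D by auto
        ultimately have "a \<in> D" using D x unfolding connected_iff_interval by (meson less_imp_le)
        then show False using aD by simp
      qed
    qed
    then have "D \<subseteq> C1" using components_maximal[OF C1(1), of D] D c by auto
    then show "D = C1" using D by auto
  qed
  have Z: "E \<in> insert (C0 \<union> {a..b}) (components T - {C0})" if E: "E \<in> components (T \<union> {a..b})" for E
  proof (cases "a \<in> E")
    case True
    have Econ: "connected E" "E \<subseteq> T \<union> {a..b}"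
      using in_components_connected[OF E] in_components_subset[OF E] by auto
    have "E \<subseteq> C0 \<union> {a..b}" unfolding C0_def using conn_sub_merge[OF T Econ True] .
    moreover have "E = C0 \<union> {a..b}" using components_eq[OF E X] True aC0 by auto
    ultimately show ?thesis by auto
  next
    case False
    have "E \<inter> {a..b} = {}"
    proof (rule ccontr)
      assume "E \<inter> {a..b} \<noteq> {}"
      then have "{a..b} \<subseteq> E" using components_maximal[OF E, of "{a..b}"] by auto
      then show False using False ab by auto
    qed
    moreover have "E \<subseteq> T \<union> {a..b}" by (rule in_components_subset[OF E])
    ultimately have "E \<subseteq> T" by blast
    then have "E \<in> components T" using components_intermediate_subset[OF E] by auto
    moreover have "E \<noteq> C0" using False aC0 by auto
    ultimately show ?thesis by auto
  qed
  show ?thesis unfolding C0_def[symmetric] using X Y Z by blast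
qed

lemma conn_sep:
  fixes T D :: "real set"
  assumes T: "T \<subseteq> {..a}" "a < x" and D: "connected D" "D \<subseteq> T \<union> {x}" "x \<in> D"
  shows "D = {x}"
proof -
  have "y = x" if y: "y \<in> D" for y
  proof (rule ccontr)
    assume yx: "y \<noteq> x"
    then have "y \<in> T" using y D(2) by blast
    then have ya: "y \<le> a" using T(1) by auto
    have m1: "y \<le> (a + x) / 2" using ya T(2) by simp
    have m2: "(a + x) / 2 \<le> x" using T(2) by simp
    have conn: "\<forall>u\<in>D. \<forall>v\<in>D. \<forall>z. u \<le> z \<longrightarrow> z \<le> v \<longrightarrow> z \<in> D"
      using D(1) unfolding connected_iff_interval .
    have "(a + x) / 2 \<in> D" using conn y D(3) m1 m2 by blast
    then have "(a + x) / 2 \<in> T \<union> {x}" using D(2) by blast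
    moreover have "a < (a + x) / 2" using T(2) by simp
    then have "(a + x) / 2 \<notin> T" using T(1) by auto
    moreover have "(a + x) / 2 \<noteq> x" using T(2) by simp
    ultimately show False by blast
  qed
  then show ?thesis using D(3) by blast
qed

lemma components_sep:
  fixes T :: "real set"
  assumes T: "T \<subseteq> {..a}" "a < x"
  shows "components (T \<union> {x}) = insert {x} (components T)" "{x} \<notin> components T"
proof -
  have X: "{x} \<in> components (T \<union> {x})"
    unfolding in_components_maximal
  proof (intro conjI allI impI)
    fix D assume D: "D \<noteq> {} \<and> {x} \<subseteq> D \<and> D \<subseteq> T \<union> {x} \<and> connected D"
    show "D = {x}" by (rule conn_sep[OF T]) (use D in auto)
  qed auto
  have Y: "C1 \<in> components (T \<union> {x})" if C1: "C1 \<in> components T" for C1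
    unfolding in_components_maximal
  proof (intro conjI allI impI)
    show "C1 \<noteq> {}" using C1 in_components_nonempty by auto
    show "C1 \<subseteq> T \<union> {x}" using C1 in_components_subset by auto
    show "connected C1" using C1 in_components_connected by auto
    fix D assume D: "D \<noteq> {} \<and> C1 \<subseteq> D \<and> D \<subseteq> T \<union> {x} \<and> connected D"
    obtain c where c: "c \<in> C1" using C1 in_components_nonempty by auto
    have cT: "c \<in> T" using c in_components_subset[OF C1] by auto
    have "x \<notin> D"
    proof
      assume "x \<in> D"
      then have "D = {x}" using conn_sep[OF T, of D] D by blast
      then have "c = x" using c D by blast
      then show False using cT T by auto
    qed
    then have "D \<subseteq> T" using D by blast
    then have "D \<subseteq> C1" using components_maximal[OF C1(1), of D] D c by blast
    then show "D = C1" using D by blast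
  qed
  have Z: "E \<in> insert {x} (components T)" if E: "E \<in> components (T \<union> {x})" for E
  proof (cases "x \<in> E")
    case True
    have "E = {x}" by (rule conn_sep[OF T in_components_connected[OF E] in_components_subset[OF E] True])
    then show ?thesis by simp
  next
    case False
    then have "E \<subseteq> T" using in_components_subset[OF E] by auto
    then show ?thesis using components_intermediate_subset[OF E] by auto
  qed
  show "components (T \<union> {x}) = insert {x} (components T)" using X Y Z by blast
  show "{x} \<notin> components T" using in_components_subset[of "{x}" T] T by auto
qed

lemma card_components_merge:
  fixes T :: "real set"
  assumes T: "T \<subseteq> {..a}" "a \<in> T" and ab: "a \<le> b" and fin: "finite (components T)"
  shows "finite (components (T \<union> {a..b}))" "card (components (T \<union> {a..b})) = card (components T)"
proof -
  define C0 where "C0 = connected_component_set T a"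
  have C0c: "C0 \<in> components T" unfolding C0_def using T by (simp add: componentsI)
  have aC0: "a \<in> C0" unfolding C0_def using T by simp
  have eq: "components (T \<union> {a..b}) = insert (C0 \<union> {a..b}) (components T - {C0})"
    unfolding C0_def by (rule components_merge[OF T ab])
  have nin: "C0 \<union> {a..b} \<notin> components T - {C0}"
  proof
    assume "C0 \<union> {a..b} \<in> components T - {C0}"
    then have "C0 \<union> {a..b} = C0" using components_eq[OF _ C0c, of "C0 \<union> {a..b}"] aC0 by auto
    moreover have "C0 \<union> {a..b} \<in> components T" using \<open>C0 \<union> {a..b} \<in> components T - {C0}\<close> by auto
    ultimately show False using \<open>C0 \<union> {a..b} \<in> components T - {C0}\<close> by auto
  qed
  show "finite (components (T \<union> {a..b}))" using eq fin by simp
  have "card (components (T \<union> {a..b})) = card (components T - {C0}) + 1"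
    using eq nin fin by simp
  also have "\<dots> = card (components T)" using fin C0c card_Diff1_less[OF fin C0c]
    by (simp add: card_Diff_singleton)
  finally show "card (components (T \<union> {a..b})) = card (components T)" .
qed

lemma card_components_sep:
  fixes T :: "real set"
  assumes T: "T \<subseteq> {..a}" "a < x" and fin: "finite (components T)"
  shows "finite (components (T \<union> {x}))" "card (components (T \<union> {x})) = card (components T) + 1"
  using components_sep[OF T] fin by auto



definition cellr :: "real \<Rightarrow> nat \<Rightarrow> real set" where
  "cellr d i = {real i / d .. (real i + 1) / d}"

definition Sm :: "real \<Rightarrow> (nat \<Rightarrow> bool) \<Rightarrow> (nat \<Rightarrow> bool) \<Rightarrow> nat \<Rightarrow> real set" where
  "Sm d P C m = {real i / d | i. i < m \<and> P i} \<union> (\<Union>i\<in>{i. Suc i < m \<and> C i}. cellr d i)"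

lemma measure_Un_fin:
  fixes A B :: "real set"
  assumes "compact A" "compact B" "finite (A \<inter> B)"
  shows "measure lborel (A \<union> B) = measure lborel A + measure lborel B"
proof -
  have "measure lborel (A \<inter> B) = 0"
    using finite_imp_null_set_lborel[OF assms(3)] by (simp add: measure_def null_setsD1)
  then show ?thesis using measure_Un3[OF fmeasurable_compact[OF assms(1)] fmeasurable_compact[OF assms(2)]]
    by simp
qed

lemma Sm_0: "Sm d P C 0 = {}" unfolding Sm_def by auto

lemma Sm_Suc: "Sm d P C (Suc m) = Sm d P C m \<union> (if P m then {real m / d} else {})
   \<union> (if 0 < m \<and> C (m - 1) then cellr d (m - 1) else {})"
proof -
  have 1: "{real i / d | i. i < Suc m \<and> P i} = {real i / d | i. i < m \<and> P i} \<union> (if P m then {real m / d} else {})"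
    by (auto simp: less_Suc_eq)
  have 2: "{i. Suc i < Suc m \<and> C i} = {i. Suc i < m \<and> C i} \<union> (if 0 < m \<and> C (m - 1) then {m - 1} else {})"
    by (cases m) (auto simp: less_Suc_eq)
  show ?thesis
  proof (cases "0 < m \<and> C (m - 1)")
    case True
    show ?thesis
    proof (cases "P m")
      case True2: True
      show ?thesis unfolding Sm_def 1 2 if_P[OF True] if_P[OF True2] by blast
    next
      case False2: False
      show ?thesis unfolding Sm_def 1 2 if_P[OF True] if_not_P[OF False2] by blast
    qed
  next
    case False
    show ?thesis
    proof (cases "P m")
      case True2: True
      show ?thesis unfolding Sm_def 1 2 if_not_P[OF False] if_P[OF True2] by blast
    next
      case False2: False
      show ?thesis unfolding Sm_def 1 2 if_not_P[OF False] if_not_P[OF False2] by blast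
    qed
  qed
qed

lemma card_Suc_P: "card {i. i < Suc m \<and> P i} = card {i. i < m \<and> P i} + (if P m then 1 else 0)"
proof (cases "P m")
  case True
  then have "{i. i < Suc m \<and> P i} = insert m {i. i < m \<and> P i}" by (auto simp: less_Suc_eq)
  moreover have "finite {i. i < m \<and> P i}" by simp
  ultimately show ?thesis using True by simp
next
  case False
  then have "{i. i < Suc m \<and> P i} = {i. i < m \<and> P i}" by (auto simp: less_Suc_eq)
  then show ?thesis using False by simp
qed

lemma card_Suc_C: "card {i. Suc i < Suc m \<and> C i} = card {i. Suc i < m \<and> C i} + (if 0 < m \<and> C (m - 1) then 1 else 0)"
proof (cases "0 < m \<and> C (m - 1)")
  case True
  then have "{i. Suc i < Suc m \<and> C i} = insert (m - 1) {i. Suc i < m \<and> C i}" by (cases m) (auto simp: less_Suc_eq)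
  moreover have "finite {i. Suc i < m \<and> C i}" by (rule finite_subset[of _ "{..<m}"]) auto
  moreover have "m - 1 \<notin> {i. Suc i < m \<and> C i}" using True by auto
  ultimately show ?thesis using True by simp
next
  case False
  then have "{i. Suc i < Suc m \<and> C i} = {i. Suc i < m \<and> C i}" by (cases m) (auto simp: less_Suc_eq)
  then show ?thesis using False by simp
qed

lemma Sm_props:
  assumes d: "d > 0" and PC: "\<And>i. C i \<Longrightarrow> P i \<and> P (Suc i)"
  shows "Sm d P C m \<subseteq> {..(real m - 1) / d} \<and> compact (Sm d P C m)
    \<and> finite (components (Sm d P C m))
    \<and> card (components (Sm d P C m)) + card {i. Suc i < m \<and> C i} = card {i. i < m \<and> P i}
    \<and> measure lborel (Sm d P C m) = real (card {i. Suc i < m \<and> C i}) / d"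
proof (induction m)
  case 0
  then show ?case by (simp add: Sm_0)
next
  case (Suc m)
  define T where "T = Sm d P C m"
  have T: "T \<subseteq> {..(real m - 1) / d}" "compact T" "finite (components T)"
     "card (components T) + card {i. Suc i < m \<and> C i} = card {i. i < m \<and> P i}"
     "measure lborel T = real (card {i. Suc i < m \<and> C i}) / d"
    using Suc.IH unfolding T_def by auto
  have sub1: "(real m - 1) / d \<le> real m / d" using d by (simp add: divide_right_mono)
  show ?case
  proof (cases "0 < m \<and> C (m - 1)")
    case True
    define a where "a = (real m - 1) / d"
    have Pm: "P m" and Pm1: "P (m - 1)" using PC[of "m - 1"] True by auto
    have ra: "real (m - 1) = real m - 1" using True by auto
    have cell: "cellr d (m - 1) = {a .. real m / d}" unfolding cellr_def a_def ra by simp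
    have aT: "a \<in> T" unfolding T_def Sm_def a_def using Pm1 True ra by (auto intro!: exI[of _ "m - 1"])
    have eq: "Sm d P C (Suc m) = T \<union> {a .. real m / d}"
      unfolding Sm_Suc T_def[symmetric] cell if_P[OF True] if_P[OF Pm] using sub1 a_def by auto
    have ab: "a \<le> real m / d" using sub1 a_def by simp
    have fin: "finite (components (T \<union> {a .. real m / d}))"
      and cc: "card (components (T \<union> {a .. real m / d})) = card (components T)"
      using card_components_merge[OF T(1)[folded a_def] aT ab T(3)] by auto
    have "T \<inter> {a .. real m / d} \<subseteq> {a}" using T(1) a_def by auto
    then have finI: "finite (T \<inter> {a .. real m / d})" using finite_subset by blast
    have meas: "measure lborel (T \<union> {a .. real m / d}) = measure lborel T + 1 / d"
      using measure_Un_fin[OF T(2) compact_Icc finI] ab unfolding a_def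
      by (simp add: diff_divide_distrib)
    show ?thesis unfolding eq
    proof (intro conjI)
      show "T \<union> {a..real m / d} \<subseteq> {..(real (Suc m) - 1) / d}" using T(1) sub1 a_def by auto
      show "compact (T \<union> {a..real m / d})" using T(2) by (simp add: compact_Un)
      show "finite (components (T \<union> {a..real m / d}))" by (fact fin)
      show "card (components (T \<union> {a..real m / d})) + card {i. Suc i < Suc m \<and> C i} = card {i. i < Suc m \<and> P i}"
        unfolding cc card_Suc_P card_Suc_C if_P[OF True] if_P[OF Pm] using T(4) by simp
      show "measure lborel (T \<union> {a..real m / d}) = real (card {i. Suc i < Suc m \<and> C i}) / d"
        unfolding meas card_Suc_C T(5) if_P[OF True] by (simp add: add_divide_distrib)
    qed
  next
    case False
    note nC = False
    show ?thesis
    proof (cases "P m")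
      case True
      have eq: "Sm d P C (Suc m) = T \<union> {real m / d}"
        unfolding Sm_Suc T_def[symmetric] if_P[OF True] if_not_P[OF nC] by simp
      have lt: "(real m - 1) / d < real m / d" using d by (simp add: divide_strict_right_mono)
      have fin: "finite (components (T \<union> {real m / d}))"
        and cc: "card (components (T \<union> {real m / d})) = card (components T) + 1"
        using card_components_sep[OF T(1) lt T(3)] by auto
      have finI: "finite (T \<inter> {real m / d})" by simp
      have meas: "measure lborel (T \<union> {real m / d}) = measure lborel T"
        using measure_Un_fin[OF T(2) compact_sing finI] by simp
      show ?thesis unfolding eq
      proof (intro conjI)
        show "T \<union> {real m / d} \<subseteq> {..(real (Suc m) - 1) / d}" using T(1) sub1 by auto
        show "compact (T \<union> {real m / d})" using T(2) by (simp add: compact_Un)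
        show "finite (components (T \<union> {real m / d}))" by (fact fin)
        show "card (components (T \<union> {real m / d})) + card {i. Suc i < Suc m \<and> C i} = card {i. i < Suc m \<and> P i}"
          unfolding cc card_Suc_P card_Suc_C if_not_P[OF nC] if_P[OF True] using T(4) by simp
        show "measure lborel (T \<union> {real m / d}) = real (card {i. Suc i < Suc m \<and> C i}) / d"
          unfolding meas card_Suc_C T(5) if_not_P[OF nC] by simp
      qed
    next
      case False
      have eq: "Sm d P C (Suc m) = T"
        unfolding Sm_Suc T_def[symmetric] if_not_P[OF False] if_not_P[OF nC] by simp
      show ?thesis unfolding eq
      proof (intro conjI)
        show "T \<subseteq> {..(real (Suc m) - 1) / d}" using T(1) sub1 by auto
        show "card (components T) + card {i. Suc i < Suc m \<and> C i} = card {i. i < Suc m \<and> P i}"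
          unfolding card_Suc_P card_Suc_C if_not_P[OF nC] if_not_P[OF False] using T(4) by simp
        show "measure lborel T = real (card {i. Suc i < Suc m \<and> C i}) / d"
          unfolding card_Suc_C T(5) if_not_P[OF nC] by simp
      qed (use T in auto)
    qed
  qed
qed



lemma cell_cover:
  fixes N :: nat and x :: real
  assumes N: "N > 0" and x: "0 \<le> x" "x \<le> 1"
  shows "\<exists>j<N. x \<in> cellr (real N) j"
proof (cases "x = 1")
  case True
  have "x \<in> cellr (real N) (N - 1)" unfolding cellr_def using N True by (simp add: of_nat_diff)
  then show ?thesis using N by (intro exI[of _ "N - 1"]) auto
next
  case False
  define j where "j = nat \<lfloor>x * real N\<rfloor>"
  have f0: "0 \<le> \<lfloor>x * real N\<rfloor>" using x by simp
  have rj: "real j = of_int \<lfloor>x * real N\<rfloor>" unfolding j_def using f0 by simp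
  have l1: "real j \<le> x * real N" unfolding rj by simp
  have l2: "x * real N < real j + 1" unfolding rj by linarith
  have "x * real N < real N" using False x N by simp
  then have "real j < real N" using l1 by linarith
  then have jN: "j < N" by simp
  have "x \<in> cellr (real N) j" unfolding cellr_def using l1 l2 N
    by (simp add: divide_simps mult.commute)
  then show ?thesis using jN by blast
qed

lemma cell_sub01:
  fixes N :: nat assumes "j < N"
  shows "cellr (real N) j \<subseteq> {0..1}"
  using assms unfolding cellr_def by (auto simp: divide_simps)

lemma open_cell_disj:
  fixes N :: nat
  assumes N: "N > 0" and y: "real j / real N < y" "y < (real j + 1) / real N" and "y \<in> cellr (real N) j'"
  shows "j' = j"
proof -
  have a: "real j' \<le> y * real N" "y * real N \<le> real j' + 1" using assms(4) N unfolding cellr_def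
    by (auto simp: divide_simps mult.commute)
  have b: "real j < y * real N" "y * real N < real j + 1" using y N by (auto simp: divide_simps mult.commute)
  have "real j' < real j + 1" "real j < real j' + 1" using a b by linarith+
  then show ?thesis by linarith
qed

lemma D_eq_cells:
  fixes N :: nat and K :: "real set" and kp :: "nat \<Rightarrow> bool"
  assumes N: "N > 0" and K: "K = (\<Union>j\<in>{j. j < N \<and> kp j}. cellr (real N) j)"
  shows "closure ({0..1} - K) = (\<Union>j\<in>{j. j < N \<and> \<not> kp j}. cellr (real N) j)"
proof
  have cl: "closed (\<Union>j\<in>{j. j < N \<and> \<not> kp j}. cellr (real N) j)"
    by (intro closed_UN) (auto simp: cellr_def)
  have "{0..1} - K \<subseteq> (\<Union>j\<in>{j. j < N \<and> \<not> kp j}. cellr (real N) j)"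
  proof
    fix x assume x: "x \<in> {0..1} - K"
    then obtain j where j: "j < N" "x \<in> cellr (real N) j" using cell_cover[OF N] by auto
    have "\<not> kp j" using x j K by auto
    then show "x \<in> (\<Union>j\<in>{j. j < N \<and> \<not> kp j}. cellr (real N) j)" using j by auto
  qed
  then show "closure ({0..1} - K) \<subseteq> (\<Union>j\<in>{j. j < N \<and> \<not> kp j}. cellr (real N) j)"
    using cl by (rule closure_minimal)
next
  show "(\<Union>j\<in>{j. j < N \<and> \<not> kp j}. cellr (real N) j) \<subseteq> closure ({0..1} - K)"
  proof (rule UN_least)
    fix j assume j: "j \<in> {j. j < N \<and> \<not> kp j}"
    have lt: "real j / real N < (real j + 1) / real N" using N by (simp add: divide_strict_right_mono)
    have "{real j / real N <..< (real j + 1) / real N} \<subseteq> {0..1} - K"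
    proof
      fix y assume y: "y \<in> {real j / real N <..< (real j + 1) / real N}"
      have "y \<in> cellr (real N) j" using y unfolding cellr_def by auto
      then have y01: "y \<in> {0..1}" using cell_sub01[of j N] j by auto
      have "y \<notin> K"
      proof
        assume "y \<in> K"
        then obtain j' where j': "j' < N" "kp j'" "y \<in> cellr (real N) j'" using K by auto
        have "j' = j" using open_cell_disj[OF N _ _ j'(3)] y by auto
        then show False using j j' by auto
      qed
      then show "y \<in> {0..1} - K" using y01 by auto
    qed
    then have "closure {real j / real N <..< (real j + 1) / real N} \<subseteq> closure ({0..1} - K)"
      by (rule closure_mono)
    then show "cellr (real N) j \<subseteq> closure ({0..1} - K)"
      unfolding cellr_def using closure_greaterThanLessThan[OF lt] by simp
  qed
qed

definition Pt :: "(nat \<Rightarrow> bool) \<Rightarrow> nat \<Rightarrow> bool" where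
  "Pt R i = ((0 < i \<and> R (i - 1)) \<or> R i)"

lemma Pt_cons: "R i \<Longrightarrow> Pt R i \<and> Pt R (Suc i)"
  unfolding Pt_def by auto

lemma pt_in_cells:
  fixes N :: nat
  assumes N: "N > 0" and "Pt R i"
  shows "real i / real N \<in> (\<Union>j\<in>{j. R j}. cellr (real N) j)"
proof (cases "R i")
  case True
  then show ?thesis unfolding cellr_def using N by (auto intro!: bexI[of _ i] divide_right_mono)
next
  case False
  then have "0 < i" "R (i - 1)" using assms(2) unfolding Pt_def by auto
  then show ?thesis unfolding cellr_def using N
    by (auto intro!: bexI[of _ "i - 1"] divide_right_mono simp: of_nat_diff)
qed

lemma cells_as_Sm:
  fixes N :: nat
  assumes N: "N > 0" and R: "\<And>i. R i \<Longrightarrow> i < N"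
  shows "(\<Union>j\<in>{j. R j}. cellr (real N) j) = Sm (real N) (Pt R) R (Suc N)"
proof
  show "(\<Union>j\<in>{j. R j}. cellr (real N) j) \<subseteq> Sm (real N) (Pt R) R (Suc N)"
    unfolding Sm_def using R by auto
  show "Sm (real N) (Pt R) R (Suc N) \<subseteq> (\<Union>j\<in>{j. R j}. cellr (real N) j)"
    unfolding Sm_def using pt_in_cells[OF N] by auto
qed

lemma two_cells:
  fixes N :: nat
  assumes N: "N > 0" and x: "x \<in> cellr (real N) a" "x \<in> cellr (real N) b" and ab: "a < b"
  shows "b = Suc a \<and> x = real b / real N"
proof -
  have 1: "x * real N \<le> real a + 1" "real b \<le> x * real N"
    using x N unfolding cellr_def by (auto simp: divide_simps mult.commute)
  have "real a + 1 \<le> real b" using ab by simp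
  then have "real b = real a + 1" "x * real N = real b" using 1 by linarith+
  then show ?thesis using N by (auto simp: divide_simps)
qed

lemma cells_inter_Sm:
  fixes N :: nat
  assumes N: "N > 0" and R1: "\<And>i. R1 i \<Longrightarrow> i < N" and R2: "\<And>i. R2 i \<Longrightarrow> i < N"
  shows "(\<Union>j\<in>{j. R1 j}. cellr (real N) j) \<inter> (\<Union>j\<in>{j. R2 j}. cellr (real N) j)
     = Sm (real N) (\<lambda>i. Pt R1 i \<and> Pt R2 i) (\<lambda>i. R1 i \<and> R2 i) (Suc N)"
proof
  show "(\<Union>j\<in>{j. R1 j}. cellr (real N) j) \<inter> (\<Union>j\<in>{j. R2 j}. cellr (real N) j)
     \<subseteq> Sm (real N) (\<lambda>i. Pt R1 i \<and> Pt R2 i) (\<lambda>i. R1 i \<and> R2 i) (Suc N)"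
  proof
    fix x assume "x \<in> (\<Union>j\<in>{j. R1 j}. cellr (real N) j) \<inter> (\<Union>j\<in>{j. R2 j}. cellr (real N) j)"
    then obtain j1 j2 where j1: "R1 j1" "x \<in> cellr (real N) j1" and j2: "R2 j2" "x \<in> cellr (real N) j2"
      by blast
    consider "j1 = j2" | "j1 < j2" | "j2 < j1" by linarith
    then show "x \<in> Sm (real N) (\<lambda>i. Pt R1 i \<and> Pt R2 i) (\<lambda>i. R1 i \<and> R2 i) (Suc N)"
    proof cases
      case 1
      then show ?thesis unfolding Sm_def using j1 j2 R1[of j1] by auto
    next
      case 2
      then have e: "j2 = Suc j1" "x = real j2 / real N" using two_cells[OF N j1(2) j2(2)] by auto
      have "Pt R1 j2" "Pt R2 j2" unfolding Pt_def using e j1 j2 by auto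
      moreover have "j2 < Suc N" using R2[OF j2(1)] by simp
      ultimately show ?thesis unfolding Sm_def using e by blast
    next
      case 3
      then have e: "j1 = Suc j2" "x = real j1 / real N" using two_cells[OF N j2(2) j1(2)] by auto
      have "Pt R1 j1" "Pt R2 j1" unfolding Pt_def using e j1 j2 by auto
      moreover have "j1 < Suc N" using R1[OF j1(1)] by simp
      ultimately show ?thesis unfolding Sm_def using e by blast
    qed
  qed
  show "Sm (real N) (\<lambda>i. Pt R1 i \<and> Pt R2 i) (\<lambda>i. R1 i \<and> R2 i) (Suc N)
     \<subseteq> (\<Union>j\<in>{j. R1 j}. cellr (real N) j) \<inter> (\<Union>j\<in>{j. R2 j}. cellr (real N) j)"
    unfolding Sm_def using pt_in_cells[OF N, of R1] pt_in_cells[OF N, of R2] by blast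
qed

lemma V_Sm:
  fixes N :: nat
  assumes N: "N > 0" and PC: "\<And>i. C i \<Longrightarrow> P i \<and> P (Suc i)" and CN: "\<And>i. C i \<Longrightarrow> i < N"
  shows "V1 (Sm (real N) P C (Suc N)) = real (card {i. C i}) / real N"
    "V0 (Sm (real N) P C (Suc N)) = real (card {i. i < Suc N \<and> P i}) - real (card {i. C i})"
proof -
  have e: "{i. Suc i < Suc N \<and> C i} = {i. C i}" using CN by auto
  have N': "real N > 0" using N by simp
  note S = Sm_props[where d="real N" and P=P and C=C and m="Suc N", OF N' PC, unfolded e]
  show "V1 (Sm (real N) P C (Suc N)) = real (card {i. C i}) / real N"
    unfolding V1_def using S by blast
  have "card (components (Sm (real N) P C (Suc N))) + card {i. C i} = card {i. i < Suc N \<and> P i}"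
    using S by blast
  then show "V0 (Sm (real N) P C (Suc N)) = real (card {i. i < Suc N \<and> P i}) - real (card {i. C i})"
    unfolding V0_def by (metis add_diff_cancel_right' of_nat_add)
qed



definition anc :: "nat \<Rightarrow> nat \<Rightarrow> nat \<Rightarrow> (nat \<times> nat) set" where
  "anc M n j = (\<lambda>l. (l, j div M ^ (n - l))) ` {1..n}"

lemma kept_anc: "kept M \<omega> n j \<longleftrightarrow> (\<forall>c\<in>anc M n j. \<omega> c)"
  unfolding kept_def anc_def by auto

lemma coin_set_eq: "coin_set M n = Sigma {1..n} (\<lambda>k. {..<M ^ k})"
  unfolding coin_set_def by auto

lemma finite_coin_set: "finite (coin_set M n)"
  unfolding coin_set_eq by auto

lemma anc_sub:
  assumes "0 < M" "j < M ^ n"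
  shows "anc M n j \<subseteq> coin_set M n"
proof
  fix c assume "c \<in> anc M n j"
  then obtain l where l: "l \<in> {1..n}" "c = (l, j div M ^ (n - l))" unfolding anc_def by auto
  have "M ^ n = M ^ l * M ^ (n - l)" using l by (simp flip: power_add)
  then have "j div M ^ (n - l) < M ^ l" using assms(2) by (simp add: less_mult_imp_div_less)
  then show "c \<in> coin_set M n" using l unfolding coin_set_def by auto
qed

lemma card_anc: "card (anc M n j) = n"
proof -
  have "inj_on (\<lambda>l. (l, j div M ^ (n - l))) {1..n}" by (auto simp: inj_on_def)
  then show ?thesis unfolding anc_def by (simp add: card_image)
qed

lemma prob_all_true:
  assumes p: "0 \<le> p" "p \<le> 1" and S: "S \<subseteq> coin_set M n"
  shows "measure_pmf.prob (perc_pmf M p n) {\<omega>. \<forall>c\<in>S. \<omega> c} = p ^ card S"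
proof -
  define B where "B = (\<lambda>c::nat\<times>nat. if c \<in> S then {True} else (UNIV :: bool set))"
  have e: "{\<omega>. \<forall>c\<in>S. \<omega> c} = Pi (coin_set M n) B"
    using S unfolding B_def Pi_def by auto
  have "measure_pmf.prob (perc_pmf M p n) {\<omega>. \<forall>c\<in>S. \<omega> c}
      = (\<Prod>c\<in>coin_set M n. measure_pmf.prob (bernoulli_pmf p) (B c))"
    unfolding e perc_pmf_def by (rule measure_Pi_pmf_Pi[OF finite_coin_set])
  also have "\<dots> = (\<Prod>c\<in>coin_set M n. if c \<in> S then p else 1)"
    by (rule prod.cong) (use p in \<open>auto simp: B_def measure_pmf_single\<close>)
  also have "\<dots> = p ^ card S"
    using S finite_coin_set[of M n] by (simp add: prod.If_cases Int_absorb1 finite_subset)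
  finally show ?thesis .
qed

lemma finite_set_perc: "finite (set_pmf (perc_pmf M p n))"
proof -
  have "set_pmf (perc_pmf M p n) \<subseteq> PiE_dflt (coin_set M n) False (set_pmf \<circ> (\<lambda>_. bernoulli_pmf p))"
    unfolding perc_pmf_def by (rule set_Pi_pmf_subset'[OF finite_coin_set])
  moreover have "finite (PiE_dflt (coin_set M n) False (set_pmf \<circ> (\<lambda>_. bernoulli_pmf p)))"
    by (intro finite_PiE_dflt finite_coin_set) auto
  ultimately show ?thesis by (rule finite_subset)
qed

lemma prob_compl_pmf: "measure_pmf.prob Q {x. \<not> A x} = 1 - measure_pmf.prob Q {x. A x}"
proof -
  have "{x. \<not> A x} = space (measure_pmf Q) - {x. A x}" by auto
  then show ?thesis using measure_pmf.prob_compl[of "{x. A x}" Q] by simp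
qed

lemma exp_sum_bool:
  assumes fin: "finite (set_pmf Q)" and I: "finite I"
  shows "measure_pmf.expectation Q (\<lambda>x. \<Sum>i\<in>I. of_bool (A i x) :: real)
        = (\<Sum>i\<in>I. measure_pmf.prob Q {x. A i x})"
proof -
  have "measure_pmf.expectation Q (\<lambda>x. \<Sum>i\<in>I. of_bool (A i x) :: real)
      = (\<Sum>i\<in>I. measure_pmf.expectation Q (\<lambda>x. of_bool (A i x) :: real))"
    by (rule Bochner_Integration.integral_sum) (rule integrable_measure_pmf_finite[OF fin])
  also have "\<dots> = (\<Sum>i\<in>I. measure_pmf.prob Q {x. A i x})"
  proof (rule sum.cong)
    fix i
    have "(\<lambda>x. of_bool (A i x) :: real) = indicator {x. A i x}" by (auto simp: indicator_def)
    then show "measure_pmf.expectation Q (\<lambda>x. of_bool (A i x) :: real) = measure_pmf.prob Q {x. A i x}"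
      by simp
  qed simp
  finally show ?thesis .
qed

lemma prob_pair_sq:
  assumes fin: "finite (set_pmf Q)"
  shows "measure_pmf.prob (pair_pmf Q Q) ({x. A x} \<times> {x. A x}) = (measure_pmf.prob Q {x. A x})\<^sup>2"
proof -
  define E where "E = {x. A x} \<inter> set_pmf Q"
  have "measure_pmf.prob (pair_pmf Q Q) ({x. A x} \<times> {x. A x})
      = measure_pmf.prob (pair_pmf Q Q) (({x. A x} \<times> {x. A x}) \<inter> set_pmf (pair_pmf Q Q))"
    by (rule measure_Int_set_pmf[symmetric])
  also have "({x. A x} \<times> {x. A x}) \<inter> set_pmf (pair_pmf Q Q) = E \<times> E" unfolding E_def by auto
  also have "measure_pmf.prob (pair_pmf Q Q) (E \<times> E) = measure_pmf.prob Q E * measure_pmf.prob Q E"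
    by (rule measure_pmf_prob_product) (use fin in \<open>auto simp: E_def intro: countable_finite\<close>)
  also have "measure_pmf.prob Q E = measure_pmf.prob Q {x. A x}" unfolding E_def by (rule measure_Int_set_pmf)
  finally show ?thesis by (simp add: power2_eq_square)
qed

lemma exp_pair_sum_bool:
  assumes fin: "finite (set_pmf Q)" and I: "finite I"
  shows "measure_pmf.expectation (pair_pmf Q Q) (\<lambda>(x, y). \<Sum>i\<in>I. of_bool (A i x \<and> A i y) :: real)
        = (\<Sum>i\<in>I. (measure_pmf.prob Q {x. A i x})\<^sup>2)"
proof -
  have fin2: "finite (set_pmf (pair_pmf Q Q))" using fin by simp
  have "(\<lambda>(x, y). \<Sum>i\<in>I. of_bool (A i x \<and> A i y) :: real) = (\<lambda>z. \<Sum>i\<in>I. of_bool (z \<in> {x. A i x} \<times> {x. A i x}))"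
    by auto
  then have "measure_pmf.expectation (pair_pmf Q Q) (\<lambda>(x, y). \<Sum>i\<in>I. of_bool (A i x \<and> A i y) :: real)
     = (\<Sum>i\<in>I. measure_pmf.prob (pair_pmf Q Q) {z. z \<in> {x. A i x} \<times> {x. A i x}})"
    using exp_sum_bool[OF fin2 I, of "\<lambda>i z. z \<in> {x. A i x} \<times> {x. A i x}"] by simp
  also have "\<dots> = (\<Sum>i\<in>I. (measure_pmf.prob Q {x. A i x})\<^sup>2)"
    using prob_pair_sq[OF fin] by simp
  finally show ?thesis .
qed

lemma card_as_sum:
  assumes "finite I" "\<And>i. A i \<Longrightarrow> i \<in> I"
  shows "real (card {i. A i}) = (\<Sum>i\<in>I. of_bool (A i))"
proof -
  have "{i. A i} = I \<inter> {i. A i}" using assms(2) by auto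
  then show ?thesis using assms(1) by simp
qed



definition cnt :: "nat \<Rightarrow> nat \<Rightarrow> nat \<Rightarrow> nat" where
  "cnt M n i = card {t. t < n \<and> M ^ t dvd i}"

lemma div_pred:
  fixes i k :: nat
  assumes "0 < i"
  shows "i div k = (if k dvd i then Suc ((i - 1) div k) else (i - 1) div k)"
proof -
  obtain m where m: "i = Suc m" using assms by (cases i) auto
  show ?thesis unfolding m using div_Suc[of m k] by (simp add: dvd_eq_mod_eq_0)
qed

lemma card_anc_union:
  assumes M: "0 < M" and i: "0 < i"
  shows "card (anc M n (i - 1) \<union> anc M n i) = n + cnt M n i"
proof -
  define L where "L = {l \<in> {1..n}. M ^ (n - l) dvd i}"
  define X where "X = (\<lambda>l. (l, (i - 1) div M ^ (n - l))) ` L"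
  have U: "anc M n (i - 1) \<union> anc M n i = anc M n i \<union> X"
  proof
    show "anc M n (i - 1) \<union> anc M n i \<subseteq> anc M n i \<union> X"
    proof
      fix c assume "c \<in> anc M n (i - 1) \<union> anc M n i"
      then consider "c \<in> anc M n i" | l where "l \<in> {1..n}" "c = (l, (i - 1) div M ^ (n - l))"
        unfolding anc_def by blast
      then show "c \<in> anc M n i \<union> X"
      proof cases
        case (2 l)
        show ?thesis
        proof (cases "M ^ (n - l) dvd i")
          case True
          then show ?thesis using 2 unfolding X_def L_def by auto
        next
          case False
          then have "(i - 1) div M ^ (n - l) = i div M ^ (n - l)" using div_pred[OF i, of "M ^ (n - l)"] by simp
          then show ?thesis using 2 unfolding anc_def by auto
        qed
      qed simp
    qed
    show "anc M n i \<union> X \<subseteq> anc M n (i - 1) \<union> anc M n i"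
      unfolding X_def L_def anc_def by auto
  qed
  have D: "anc M n i \<inter> X = {}"
  proof (rule ccontr)
    assume "anc M n i \<inter> X \<noteq> {}"
    then obtain l l' where l: "l \<in> {1..n}" "l' \<in> L" "(l, i div M ^ (n - l)) = (l', (i - 1) div M ^ (n - l'))"
      unfolding anc_def X_def by blast
    then have "l = l'" "M ^ (n - l) dvd i" "i div M ^ (n - l) = (i - 1) div M ^ (n - l)" unfolding L_def by auto
    then show False using div_pred[OF i, of "M ^ (n - l)"] by simp
  qed
  have cX: "card X = card L"
    unfolding X_def by (rule card_image) (auto simp: inj_on_def)
  have cL: "card L = cnt M n i"
  proof -
    have "(\<lambda>l. n - l) ` L = {t. t < n \<and> M ^ t dvd i}"
    proof
      show "(\<lambda>l. n - l) ` L \<subseteq> {t. t < n \<and> M ^ t dvd i}" unfolding L_def by auto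
      show "{t. t < n \<and> M ^ t dvd i} \<subseteq> (\<lambda>l. n - l) ` L"
      proof
        fix t assume t: "t \<in> {t. t < n \<and> M ^ t dvd i}"
        then have "n - t \<in> L" "t = n - (n - t)" unfolding L_def by auto
        then show "t \<in> (\<lambda>l. n - l) ` L" by blast
      qed
    qed
    moreover have "inj_on (\<lambda>l. n - l) L" unfolding L_def by (auto simp: inj_on_def)
    ultimately show ?thesis unfolding cnt_def by (metis card_image)
  qed
  have fin: "finite (anc M n i)" "finite X" unfolding anc_def X_def L_def by auto
  show ?thesis unfolding U using card_Un_disjoint[OF fin D] cX cL card_anc by simp
qed

definition G :: "real \<Rightarrow> nat \<Rightarrow> nat \<Rightarrow> real" where
  "G q M n = (\<Sum>i\<in>{1..<M ^ n}. q ^ cnt M n i)"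

lemma cnt_nondiv:
  assumes M: "0 < M" and b: "0 < b" "b < M"
  shows "cnt M (Suc n) (a * M + b) = 1"
proof -
  have "{t. t < Suc n \<and> M ^ t dvd a * M + b} = {0}"
  proof (rule ccontr)
    assume "{t. t < Suc n \<and> M ^ t dvd a * M + b} \<noteq> {0}"
    then obtain t where t: "t < Suc n" "M ^ t dvd a * M + b" "t \<noteq> 0" by auto
    then have "M dvd M ^ t" by (cases t) auto
    then have "M dvd a * M + b" using t(2) by (rule dvd_trans)
    then have "M dvd b" by (simp add: dvd_add_right_iff)
    then show False using b by (auto dest: dvd_imp_le)
  qed
  then show ?thesis unfolding cnt_def by simp
qed

lemma cnt_mult:
  assumes M: "0 < M"
  shows "cnt M (Suc n) (a * M) = Suc (cnt M n a)"
proof -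
  have "{t. t < Suc n \<and> M ^ t dvd a * M} = insert 0 (Suc ` {t. t < n \<and> M ^ t dvd a})"
  proof
    show "{t. t < Suc n \<and> M ^ t dvd a * M} \<subseteq> insert 0 (Suc ` {t. t < n \<and> M ^ t dvd a})"
    proof
      fix t assume t: "t \<in> {t. t < Suc n \<and> M ^ t dvd a * M}"
      show "t \<in> insert 0 (Suc ` {t. t < n \<and> M ^ t dvd a})"
      proof (cases t)
        case (Suc s)
        then have "M ^ s * M dvd a * M" using t by (simp add: mult.commute)
        then have "M ^ s dvd a" using M by simp
        then show ?thesis using Suc t by auto
      qed simp
    qed
    show "insert 0 (Suc ` {t. t < n \<and> M ^ t dvd a}) \<subseteq> {t. t < Suc n \<and> M ^ t dvd a * M}"
      by (auto simp: mult.commute)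
  qed
  moreover have "card (insert 0 (Suc ` {t. t < n \<and> M ^ t dvd a})) = Suc (card {t. t < n \<and> M ^ t dvd a})"
    by (subst card_insert_disjoint) (auto simp: card_image)
  ultimately show ?thesis unfolding cnt_def by simp
qed

lemma G_alt: "G q M n = (\<Sum>i<M ^ n. if i = 0 then 0 else q ^ cnt M n i)"
proof -
  have "(\<Sum>i<M ^ n. if i = 0 then 0 else q ^ cnt M n i) = (\<Sum>i\<in>{1..<M ^ n}. if i = 0 then 0 else q ^ cnt M n i)"
    by (rule sum.mono_neutral_right) auto
  also have "\<dots> = G q M n" unfolding G_def by (rule sum.cong) auto
  finally show ?thesis by simp
qed

lemma G_Suc:
  assumes M: "0 < M"
  shows "G q M (Suc n) = q * real (M - 1) * real M ^ n + q * G q M n"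
proof -
  define h where "h = (\<lambda>i. if i = 0 then 0 else q ^ cnt M (Suc n) i)"
  have "G q M (Suc n) = (\<Sum>i<M ^ n * M. h i)" unfolding G_alt h_def by (simp add: mult.commute)
  also have "\<dots> = (\<Sum>a<M ^ n. \<Sum>i\<in>{a * M..<a * M + M}. h i)" by (rule sum.nat_group[symmetric])
  also have "\<dots> = (\<Sum>a<M ^ n. \<Sum>b<M. h (a * M + b))"
  proof (rule sum.cong)
    fix a
    have "(\<Sum>i\<in>{a * M..<a * M + M}. h i) = (\<Sum>i\<in>{0 + a * M..<M + a * M}. h i)"
      by (simp add: add.commute)
    also have "\<dots> = sum (h \<circ> plus (a * M)) {0..<M}" by (rule sum.atLeastLessThan_shift_bounds)
    also have "\<dots> = (\<Sum>b<M. h (a * M + b))" by (simp add: atLeast0LessThan)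
    finally show "(\<Sum>i\<in>{a * M..<a * M + M}. h i) = (\<Sum>b<M. h (a * M + b))" .
  qed simp
  also have "\<dots> = (\<Sum>a<M ^ n. h (a * M) + q * real (M - 1))"
  proof (rule sum.cong)
    fix a
    have "{..<M} = insert 0 {1..<M}" using M by auto
    then have "(\<Sum>b<M. h (a * M + b)) = h (a * M) + (\<Sum>b\<in>{1..<M}. h (a * M + b))" by simp
    also have "(\<Sum>b\<in>{1..<M}. h (a * M + b)) = (\<Sum>b\<in>{1..<M}. q)"
      by (rule sum.cong) (auto simp: h_def cnt_nondiv[OF M])
    finally show "(\<Sum>b<M. h (a * M + b)) = h (a * M) + q * real (M - 1)" by (simp add: mult.commute)
  qed simp
  also have "\<dots> = (\<Sum>a<M ^ n. q * (if a = 0 then 0 else q ^ cnt M n a)) + real (M ^ n) * (q * real (M - 1))"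
  proof -
    have "(\<Sum>a<M ^ n. h (a * M)) = (\<Sum>a<M ^ n. q * (if a = 0 then 0 else q ^ cnt M n a))"
      by (rule sum.cong) (use M in \<open>auto simp: h_def cnt_mult[OF M]\<close>)
    then show ?thesis by (simp add: sum.distrib)
  qed
  also have "\<dots> = q * G q M n + q * real (M - 1) * real M ^ n"
    unfolding G_alt by (simp add: sum_distrib_left[symmetric] of_nat_power)
  finally show ?thesis by simp
qed

lemma G_closed:
  assumes M: "2 \<le> M" and q: "q < real M"
  shows "G q M n = real (M - 1) * q * (real M ^ n - q ^ n) / (real M - q)"
proof (induction n)
  case 0
  then show ?case unfolding G_def by simp
next
  case (Suc n)
  have Mq: "real M - q \<noteq> 0" using q by simp
  have M0: "0 < M" using M by simp
  have rM: "real (M - 1) = real M - 1" using M by (simp add: of_nat_diff)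
  have "G q M (Suc n) = q * (real M - 1) * real M ^ n + q * ((real M - 1) * q * (real M ^ n - q ^ n) / (real M - q))"
    using G_Suc[OF M0, of q n] Suc.IH rM by simp
  also have "\<dots> = (real M - 1) * q * (real M ^ Suc n - q ^ Suc n) / (real M - q)"
    using Mq by (simp add: field_simps)
  finally show ?case using rM by simp
qed



definition Rk :: "nat \<Rightarrow> nat \<Rightarrow> (nat \<times> nat \<Rightarrow> bool) \<Rightarrow> nat \<Rightarrow> bool" where
  "Rk M n \<omega> j = (j < M ^ n \<and> \<not> kept M \<omega> n j)"

lemma perc_D_cells:
  assumes M: "0 < M"
  shows "perc_D M n \<omega> = (\<Union>j\<in>{j. Rk M n \<omega> j}. cellr (real (M ^ n)) j)"
proof -
  have N: "0 < M ^ n" using M by simp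
  have K: "perc_K M n \<omega> = (\<Union>j\<in>{j. j < M ^ n \<and> kept M \<omega> n j}. cellr (real (M ^ n)) j)"
    unfolding perc_K_def cellr_def by (simp add: of_nat_power)
  show ?thesis unfolding perc_D_def D_eq_cells[OF N K] Rk_def by simp
qed

lemma V_single:
  assumes M: "0 < M"
  shows "V1 (perc_D M n \<omega>) = real (card {j. Rk M n \<omega> j}) / real (M ^ n)"
    "V0 (perc_D M n \<omega>) = real (card {i. i < Suc (M ^ n) \<and> Pt (Rk M n \<omega>) i}) - real (card {j. Rk M n \<omega> j})"
proof -
  have N: "0 < M ^ n" using M by simp
  have R: "\<And>i. Rk M n \<omega> i \<Longrightarrow> i < M ^ n" unfolding Rk_def by simp
  have e: "perc_D M n \<omega> = Sm (real (M ^ n)) (Pt (Rk M n \<omega>)) (Rk M n \<omega>) (Suc (M ^ n))"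
    using perc_D_cells[OF M, of n \<omega>] cells_as_Sm[of "M ^ n" "Rk M n \<omega>"] N R by simp
  show "V1 (perc_D M n \<omega>) = real (card {j. Rk M n \<omega> j}) / real (M ^ n)"
    unfolding e by (rule V_Sm(1)[where N="M ^ n" and P="Pt (Rk M n \<omega>)" and C="Rk M n \<omega>", OF N Pt_cons R])
  show "V0 (perc_D M n \<omega>) = real (card {i. i < Suc (M ^ n) \<and> Pt (Rk M n \<omega>) i}) - real (card {j. Rk M n \<omega> j})"
    unfolding e by (rule V_Sm(2)[where N="M ^ n" and P="Pt (Rk M n \<omega>)" and C="Rk M n \<omega>", OF N Pt_cons R])
qed

lemma V_pair:
  assumes M: "0 < M"
  shows "V1 (perc_D M n \<omega>1 \<inter> perc_D M n \<omega>2) = real (card {j. Rk M n \<omega>1 j \<and> Rk M n \<omega>2 j}) / real (M ^ n)"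
    "V0 (perc_D M n \<omega>1 \<inter> perc_D M n \<omega>2) = real (card {i. i < Suc (M ^ n) \<and> (Pt (Rk M n \<omega>1) i \<and> Pt (Rk M n \<omega>2) i)})
        - real (card {j. Rk M n \<omega>1 j \<and> Rk M n \<omega>2 j})"
proof -
  have N: "0 < M ^ n" using M by simp
  have R1: "\<And>i. Rk M n \<omega>1 i \<Longrightarrow> i < M ^ n" and R2: "\<And>i. Rk M n \<omega>2 i \<Longrightarrow> i < M ^ n"
    unfolding Rk_def by simp_all
  have PC: "\<And>i. Rk M n \<omega>1 i \<and> Rk M n \<omega>2 i \<Longrightarrow> (Pt (Rk M n \<omega>1) i \<and> Pt (Rk M n \<omega>2) i) \<and>
      (Pt (Rk M n \<omega>1) (Suc i) \<and> Pt (Rk M n \<omega>2) (Suc i))" using Pt_cons by blast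
  have CN: "\<And>i. Rk M n \<omega>1 i \<and> Rk M n \<omega>2 i \<Longrightarrow> i < M ^ n" using R1 by blast
  have e: "perc_D M n \<omega>1 \<inter> perc_D M n \<omega>2 = Sm (real (M ^ n)) (\<lambda>i. Pt (Rk M n \<omega>1) i \<and> Pt (Rk M n \<omega>2) i) (\<lambda>i. Rk M n \<omega>1 i \<and> Rk M n \<omega>2 i) (Suc (M ^ n))"
    using perc_D_cells[OF M, of n \<omega>1] perc_D_cells[OF M, of n \<omega>2] cells_inter_Sm[of "M ^ n" "Rk M n \<omega>1" "Rk M n \<omega>2"] N R1 R2
    by simp
  show "V1 (perc_D M n \<omega>1 \<inter> perc_D M n \<omega>2) = real (card {j. Rk M n \<omega>1 j \<and> Rk M n \<omega>2 j}) / real (M ^ n)"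
    unfolding e by (rule V_Sm(1)[where N="M ^ n" and P="\<lambda>i. Pt (Rk M n \<omega>1) i \<and> Pt (Rk M n \<omega>2) i"
       and C="\<lambda>i. Rk M n \<omega>1 i \<and> Rk M n \<omega>2 i", OF N PC CN])
  show "V0 (perc_D M n \<omega>1 \<inter> perc_D M n \<omega>2) = real (card {i. i < Suc (M ^ n) \<and> (Pt (Rk M n \<omega>1) i \<and> Pt (Rk M n \<omega>2) i)})
        - real (card {j. Rk M n \<omega>1 j \<and> Rk M n \<omega>2 j})"
    unfolding e by (rule V_Sm(2)[where N="M ^ n" and P="\<lambda>i. Pt (Rk M n \<omega>1) i \<and> Pt (Rk M n \<omega>2) i"
       and C="\<lambda>i. Rk M n \<omega>1 i \<and> Rk M n \<omega>2 i", OF N PC CN])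
qed

lemma prob_R:
  assumes M: "0 < M" and p: "0 \<le> p" "p \<le> 1" and j: "j < M ^ n"
  shows "measure_pmf.prob (perc_pmf M p n) {\<omega>. Rk M n \<omega> j} = 1 - p ^ n"
proof -
  have "{\<omega>. Rk M n \<omega> j} = {\<omega>. \<not> (\<forall>c\<in>anc M n j. \<omega> c)}" unfolding Rk_def kept_anc using j by simp
  then have "measure_pmf.prob (perc_pmf M p n) {\<omega>. Rk M n \<omega> j}
     = 1 - measure_pmf.prob (perc_pmf M p n) {\<omega>. \<forall>c\<in>anc M n j. \<omega> c}"
    using prob_compl_pmf[of "perc_pmf M p n" "\<lambda>\<omega>. \<forall>c\<in>anc M n j. \<omega> c"] by simp
  then show ?thesis
    using prob_all_true[OF p anc_sub[OF M j]] card_anc by simp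
qed

lemma prob_Pt:
  assumes M: "0 < M" and p: "0 \<le> p" "p \<le> 1" and i: "i < Suc (M ^ n)"
  shows "measure_pmf.prob (perc_pmf M p n) {\<omega>. Pt (Rk M n \<omega>) i}
     = (if i = 0 \<or> i = M ^ n then 1 - p ^ n else 1 - p ^ n * p ^ cnt M n i)"
proof -
  have N: "0 < M ^ n" using M by simp
  consider "i = 0" | "i = M ^ n" | "0 < i" "i < M ^ n" using i by linarith
  then show ?thesis
  proof cases
    case 1
    then have "{\<omega>. Pt (Rk M n \<omega>) i} = {\<omega>. Rk M n \<omega> 0}" unfolding Pt_def by simp
    then show ?thesis using prob_R[OF M p N] 1 by simp
  next
    case 2
    then have "{\<omega>. Pt (Rk M n \<omega>) i} = {\<omega>. Rk M n \<omega> (M ^ n - 1)}" using N unfolding Pt_def Rk_def by auto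
    then show ?thesis using prob_R[OF M p, of "M ^ n - 1"] 2 N by simp
  next
    case 3
    have "{\<omega>. Pt (Rk M n \<omega>) i} = {\<omega>. \<not> (\<forall>c\<in>anc M n (i - 1) \<union> anc M n i. \<omega> c)}"
      using 3 unfolding Pt_def Rk_def kept_anc by auto
    moreover have "anc M n (i - 1) \<union> anc M n i \<subseteq> coin_set M n"
      using anc_sub[OF M, of "i - 1" n] anc_sub[OF M, of i n] 3 by auto
    ultimately have "measure_pmf.prob (perc_pmf M p n) {\<omega>. Pt (Rk M n \<omega>) i} = 1 - p ^ (n + cnt M n i)"
      using prob_compl_pmf[of "perc_pmf M p n" "\<lambda>\<omega>. \<forall>c\<in>anc M n (i - 1) \<union> anc M n i. \<omega> c"]
        prob_all_true[OF p] card_anc_union[OF M 3(1)] by simp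
    then show ?thesis using 3 by (simp add: power_add)
  qed
qed

lemma sum_split_ends:
  fixes f :: "nat \<Rightarrow> real"
  assumes N: "0 < N"
  shows "(\<Sum>i<Suc N. f i) = f 0 + f N + (\<Sum>i\<in>{1..<N}. f i)"
proof -
  have "{..<Suc N} = insert 0 (insert N {1..<N})" using N by auto
  then show ?thesis using N by simp
qed



lemma sum_Pt_single:
  assumes M: "0 < M" and p: "0 \<le> p" "p \<le> 1"
  shows "(\<Sum>i<Suc (M ^ n). measure_pmf.prob (perc_pmf M p n) {\<omega>. Pt (Rk M n \<omega>) i})
     = 2 * (1 - p ^ n) + (real (M ^ n) - 1) - p ^ n * G p M n"
proof -
  have N: "0 < M ^ n" using M by simp
  have rN: "real (M ^ n - Suc 0) = real M ^ n - 1"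
  proof -
    have "Suc 0 \<le> M ^ n" by (rule Suc_leI[OF N])
    then have "real (M ^ n - Suc 0) = real (M ^ n) - 1" by (simp add: of_nat_diff)
    then show ?thesis by simp
  qed
  have "(\<Sum>i<Suc (M ^ n). measure_pmf.prob (perc_pmf M p n) {\<omega>. Pt (Rk M n \<omega>) i})
      = (1 - p ^ n) + (1 - p ^ n) + (\<Sum>i\<in>{1..<M ^ n}. 1 - p ^ n * p ^ cnt M n i)"
  proof -
    have "(\<Sum>i\<in>{1..<M ^ n}. measure_pmf.prob (perc_pmf M p n) {\<omega>. Pt (Rk M n \<omega>) i})
        = (\<Sum>i\<in>{1..<M ^ n}. 1 - p ^ n * p ^ cnt M n i)"
      by (rule sum.cong) (use prob_Pt[OF M p] in auto)
    then show ?thesis unfolding sum_split_ends[OF N] using prob_Pt[OF M p, of 0] prob_Pt[OF M p, of "M ^ n"] by simp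
  qed
  also have "(\<Sum>i\<in>{1..<M ^ n}. 1 - p ^ n * p ^ cnt M n i) = (real (M ^ n) - 1) - p ^ n * G p M n"
    unfolding G_def using N by (simp add: sum_subtractf sum_distrib_left rN)
  finally show ?thesis by simp
qed

lemma sum_Pt_pair:
  assumes M: "0 < M" and p: "0 \<le> p" "p \<le> 1"
  shows "(\<Sum>i<Suc (M ^ n). (measure_pmf.prob (perc_pmf M p n) {\<omega>. Pt (Rk M n \<omega>) i})\<^sup>2)
     = 2 * (1 - p ^ n)\<^sup>2 + (real (M ^ n) - 1) - 2 * p ^ n * G p M n + (p ^ n)\<^sup>2 * G (p\<^sup>2) M n"
proof -
  have N: "0 < M ^ n" using M by simp
  have rN: "real (M ^ n - Suc 0) = real M ^ n - 1"
  proof -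
    have "Suc 0 \<le> M ^ n" by (rule Suc_leI[OF N])
    then have "real (M ^ n - Suc 0) = real (M ^ n) - 1" by (simp add: of_nat_diff)
    then show ?thesis by simp
  qed
  have sq: "(1 - p ^ n * p ^ c)\<^sup>2 = 1 - 2 * p ^ n * p ^ c + (p ^ n)\<^sup>2 * (p\<^sup>2) ^ c" for c
    by (simp add: power2_eq_square power_mult_distrib algebra_simps flip: power_mult)
  have "(\<Sum>i<Suc (M ^ n). (measure_pmf.prob (perc_pmf M p n) {\<omega>. Pt (Rk M n \<omega>) i})\<^sup>2)
      = (1 - p ^ n)\<^sup>2 + (1 - p ^ n)\<^sup>2 + (\<Sum>i\<in>{1..<M ^ n}. (1 - p ^ n * p ^ cnt M n i)\<^sup>2)"
  proof -
    have "(\<Sum>i\<in>{1..<M ^ n}. (measure_pmf.prob (perc_pmf M p n) {\<omega>. Pt (Rk M n \<omega>) i})\<^sup>2)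
        = (\<Sum>i\<in>{1..<M ^ n}. (1 - p ^ n * p ^ cnt M n i)\<^sup>2)"
      by (rule sum.cong) (use prob_Pt[OF M p] in auto)
    then show ?thesis unfolding sum_split_ends[OF N] using prob_Pt[OF M p, of 0] prob_Pt[OF M p, of "M ^ n"] by simp
  qed
  also have "(\<Sum>i\<in>{1..<M ^ n}. (1 - p ^ n * p ^ cnt M n i)\<^sup>2)
     = (\<Sum>i\<in>{1..<M ^ n}. 1 - 2 * p ^ n * p ^ cnt M n i + (p ^ n)\<^sup>2 * (p\<^sup>2) ^ cnt M n i)"
    unfolding sq ..
  also have "\<dots> = (real (M ^ n) - 1) - 2 * p ^ n * G p M n + (p ^ n)\<^sup>2 * G (p\<^sup>2) M n"
    unfolding G_def using N by (simp add: sum.distrib sum_subtractf sum_distrib_left rN)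
  finally show ?thesis by simp
qed

lemma sum_R_single:
  assumes M: "0 < M" and p: "0 \<le> p" "p \<le> 1"
  shows "(\<Sum>j<M ^ n. measure_pmf.prob (perc_pmf M p n) {\<omega>. Rk M n \<omega> j}) = real (M ^ n) * (1 - p ^ n)"
  using prob_R[OF M p] by simp

lemma sum_R_pair:
  assumes M: "0 < M" and p: "0 \<le> p" "p \<le> 1"
  shows "(\<Sum>j<M ^ n. (measure_pmf.prob (perc_pmf M p n) {\<omega>. Rk M n \<omega> j})\<^sup>2) = real (M ^ n) * (1 - p ^ n)\<^sup>2"
  using prob_R[OF M p] by simp



lemma card_as_sum2: "real (card {i. i < (K::nat) \<and> B i}) = (\<Sum>i<K. of_bool (B i))"
proof -
  have e: "{i. i < K \<and> B i} = {..<K} \<inter> {i. B i}" by auto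
  have "(\<Sum>i<K. of_bool (B i) :: real) = of_nat (card ({..<K} \<inter> {i. B i}))"
    by (subst sum_of_bool_eq) auto
  then show ?thesis by (simp only: e)
qed

lemma E_V1_single:
  assumes M: "0 < M" and p: "0 \<le> p" "p \<le> 1"
  shows "measure_pmf.expectation (perc_pmf M p n) (\<lambda>\<omega>. V1 (perc_D M n \<omega>)) = 1 - p ^ n"
proof -
  have N: "0 < M ^ n" using M by simp
  have f: "(\<lambda>\<omega>. V1 (perc_D M n \<omega>)) = (\<lambda>\<omega>. (\<Sum>j<M ^ n. of_bool (Rk M n \<omega> j)) / real (M ^ n))"
  proof
    fix \<omega>
    have "real (card {j. Rk M n \<omega> j}) = (\<Sum>j<M ^ n. of_bool (Rk M n \<omega> j))"
      by (rule card_as_sum) (auto simp: Rk_def)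
    then show "V1 (perc_D M n \<omega>) = (\<Sum>j<M ^ n. of_bool (Rk M n \<omega> j)) / real (M ^ n)"
      using V_single(1)[OF M] by simp
  qed
  show ?thesis unfolding f integral_divide_zero
    using exp_sum_bool[where Q="perc_pmf M p n" and I="{..<M ^ n}" and A="\<lambda>j \<omega>. Rk M n \<omega> j", OF finite_set_perc] sum_R_single[OF M p] N
    by simp
qed

lemma E_V0_single:
  assumes M: "0 < M" and p: "0 \<le> p" "p \<le> 1"
  shows "measure_pmf.expectation (perc_pmf M p n) (\<lambda>\<omega>. V0 (perc_D M n \<omega>))
     = 2 * (1 - p ^ n) + (real (M ^ n) - 1) - p ^ n * G p M n - real (M ^ n) * (1 - p ^ n)"
proof -
  have f: "(\<lambda>\<omega>. V0 (perc_D M n \<omega>)) = (\<lambda>\<omega>. (\<Sum>i<Suc (M ^ n). of_bool (Pt (Rk M n \<omega>) i)) - (\<Sum>j<M ^ n. of_bool (Rk M n \<omega> j)))"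
  proof
    fix \<omega>
    have "real (card {j. Rk M n \<omega> j}) = (\<Sum>j<M ^ n. of_bool (Rk M n \<omega> j))"
      by (rule card_as_sum) (auto simp: Rk_def)
    moreover have "real (card {i. i < Suc (M ^ n) \<and> Pt (Rk M n \<omega>) i}) = (\<Sum>i<Suc (M ^ n). of_bool (Pt (Rk M n \<omega>) i))"
      by (rule card_as_sum2)
    ultimately show "V0 (perc_D M n \<omega>) = (\<Sum>i<Suc (M ^ n). of_bool (Pt (Rk M n \<omega>) i)) - (\<Sum>j<M ^ n. of_bool (Rk M n \<omega> j))"
      using V_single(2)[OF M] by simp
  qed
  have "measure_pmf.expectation (perc_pmf M p n) (\<lambda>\<omega>. V0 (perc_D M n \<omega>))
     = measure_pmf.expectation (perc_pmf M p n) (\<lambda>\<omega>. (\<Sum>i<Suc (M ^ n). of_bool (Pt (Rk M n \<omega>) i)) :: real)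
       - measure_pmf.expectation (perc_pmf M p n) (\<lambda>\<omega>. (\<Sum>j<M ^ n. of_bool (Rk M n \<omega> j)) :: real)"
    unfolding f by (rule Bochner_Integration.integral_diff) (rule integrable_measure_pmf_finite[OF finite_set_perc])+
  also have "\<dots> = (\<Sum>i<Suc (M ^ n). measure_pmf.prob (perc_pmf M p n) {\<omega>. Pt (Rk M n \<omega>) i})
      - (\<Sum>j<M ^ n. measure_pmf.prob (perc_pmf M p n) {\<omega>. Rk M n \<omega> j})"
    using exp_sum_bool[where Q="perc_pmf M p n" and I="{..<Suc (M ^ n)}" and A="\<lambda>i \<omega>. Pt (Rk M n \<omega>) i", OF finite_set_perc]
      exp_sum_bool[where Q="perc_pmf M p n" and I="{..<M ^ n}" and A="\<lambda>j \<omega>. Rk M n \<omega> j", OF finite_set_perc] by simp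
  also have "\<dots> = 2 * (1 - p ^ n) + (real (M ^ n) - 1) - p ^ n * G p M n - real (M ^ n) * (1 - p ^ n)"
    unfolding sum_Pt_single[OF M p] sum_R_single[OF M p] ..
  finally show ?thesis .
qed

lemma E_V1_pair:
  assumes M: "0 < M" and p: "0 \<le> p" "p \<le> 1"
  shows "measure_pmf.expectation (pair_pmf (perc_pmf M p n) (perc_pmf M p n))
       (\<lambda>(\<omega>1, \<omega>2). V1 (perc_D M n \<omega>1 \<inter> perc_D M n \<omega>2)) = (1 - p ^ n)\<^sup>2"
proof -
  have N: "0 < M ^ n" using M by simp
  have f: "(\<lambda>(\<omega>1, \<omega>2). V1 (perc_D M n \<omega>1 \<inter> perc_D M n \<omega>2))
     = (\<lambda>z. (\<lambda>(\<omega>1, \<omega>2). (\<Sum>j<M ^ n. of_bool (Rk M n \<omega>1 j \<and> Rk M n \<omega>2 j)) :: real) z / real (M ^ n))"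
  proof
    fix z :: "(nat \<times> nat \<Rightarrow> bool) \<times> (nat \<times> nat \<Rightarrow> bool)"
    obtain \<omega>1 \<omega>2 where z: "z = (\<omega>1, \<omega>2)" by (cases z)
    have "real (card {j. Rk M n \<omega>1 j \<and> Rk M n \<omega>2 j}) = (\<Sum>j<M ^ n. of_bool (Rk M n \<omega>1 j \<and> Rk M n \<omega>2 j))"
      by (rule card_as_sum) (auto simp: Rk_def)
    then show "(case z of (\<omega>1, \<omega>2) \<Rightarrow> V1 (perc_D M n \<omega>1 \<inter> perc_D M n \<omega>2))
      = (\<lambda>(\<omega>1, \<omega>2). (\<Sum>j<M ^ n. of_bool (Rk M n \<omega>1 j \<and> Rk M n \<omega>2 j)) :: real) z / real (M ^ n)"
      unfolding z using V_pair(1)[OF M] by simp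
  qed
  show ?thesis unfolding f integral_divide_zero
    using exp_pair_sum_bool[where Q="perc_pmf M p n" and I="{..<M ^ n}" and A="\<lambda>j \<omega>. Rk M n \<omega> j", OF finite_set_perc] sum_R_pair[OF M p] N
    by simp
qed

lemma E_V0_pair:
  assumes M: "0 < M" and p: "0 \<le> p" "p \<le> 1"
  shows "measure_pmf.expectation (pair_pmf (perc_pmf M p n) (perc_pmf M p n))
       (\<lambda>(\<omega>1, \<omega>2). V0 (perc_D M n \<omega>1 \<inter> perc_D M n \<omega>2))
     = 2 * (1 - p ^ n)\<^sup>2 + (real (M ^ n) - 1) - 2 * p ^ n * G p M n + (p ^ n)\<^sup>2 * G (p\<^sup>2) M n
       - real (M ^ n) * (1 - p ^ n)\<^sup>2"
proof -
  define F1 where "F1 = (\<lambda>(\<omega>1, \<omega>2). (\<Sum>i<Suc (M ^ n). of_bool (Pt (Rk M n \<omega>1) i \<and> Pt (Rk M n \<omega>2) i)) :: real)"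
  define F2 where "F2 = (\<lambda>(\<omega>1, \<omega>2). (\<Sum>j<M ^ n. of_bool (Rk M n \<omega>1 j \<and> Rk M n \<omega>2 j)) :: real)"
  have f: "(\<lambda>(\<omega>1, \<omega>2). V0 (perc_D M n \<omega>1 \<inter> perc_D M n \<omega>2)) = (\<lambda>z. F1 z - F2 z)"
  proof
    fix z :: "(nat \<times> nat \<Rightarrow> bool) \<times> (nat \<times> nat \<Rightarrow> bool)"
    obtain \<omega>1 \<omega>2 where z: "z = (\<omega>1, \<omega>2)" by (cases z)
    have "real (card {j. Rk M n \<omega>1 j \<and> Rk M n \<omega>2 j}) = (\<Sum>j<M ^ n. of_bool (Rk M n \<omega>1 j \<and> Rk M n \<omega>2 j))"
      by (rule card_as_sum) (auto simp: Rk_def)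
    moreover have "real (card {i. i < Suc (M ^ n) \<and> (Pt (Rk M n \<omega>1) i \<and> Pt (Rk M n \<omega>2) i)})
       = (\<Sum>i<Suc (M ^ n). of_bool (Pt (Rk M n \<omega>1) i \<and> Pt (Rk M n \<omega>2) i))"
      by (rule card_as_sum2)
    ultimately show "(case z of (\<omega>1, \<omega>2) \<Rightarrow> V0 (perc_D M n \<omega>1 \<inter> perc_D M n \<omega>2)) = F1 z - F2 z"
      unfolding z F1_def F2_def using V_pair(2)[OF M] by simp
  qed
  have fin2: "finite (set_pmf (pair_pmf (perc_pmf M p n) (perc_pmf M p n)))" using finite_set_perc by simp
  have "measure_pmf.expectation (pair_pmf (perc_pmf M p n) (perc_pmf M p n))
       (\<lambda>(\<omega>1, \<omega>2). V0 (perc_D M n \<omega>1 \<inter> perc_D M n \<omega>2))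
     = measure_pmf.expectation (pair_pmf (perc_pmf M p n) (perc_pmf M p n)) F1
       - measure_pmf.expectation (pair_pmf (perc_pmf M p n) (perc_pmf M p n)) F2"
    unfolding f by (rule Bochner_Integration.integral_diff) (rule integrable_measure_pmf_finite[OF fin2])+
  also have "\<dots> = (\<Sum>i<Suc (M ^ n). (measure_pmf.prob (perc_pmf M p n) {\<omega>. Pt (Rk M n \<omega>) i})\<^sup>2)
      - (\<Sum>j<M ^ n. (measure_pmf.prob (perc_pmf M p n) {\<omega>. Rk M n \<omega> j})\<^sup>2)"
    unfolding F1_def F2_def
    using exp_pair_sum_bool[where Q="perc_pmf M p n" and I="{..<Suc (M ^ n)}" and A="\<lambda>i \<omega>. Pt (Rk M n \<omega>) i", OF finite_set_perc]
      exp_pair_sum_bool[where Q="perc_pmf M p n" and I="{..<M ^ n}" and A="\<lambda>j \<omega>. Rk M n \<omega> j", OF finite_set_perc] by simp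
  also have "\<dots> = 2 * (1 - p ^ n)\<^sup>2 + (real (M ^ n) - 1) - 2 * p ^ n * G p M n + (p ^ n)\<^sup>2 * G (p\<^sup>2) M n
       - real (M ^ n) * (1 - p ^ n)\<^sup>2"
    unfolding sum_Pt_pair[OF M p] sum_R_pair[OF M p] ..
  finally show ?thesis .
qed



theorem theorem5p8:
  fixes M n :: nat and p :: real
  assumes "M \<ge> 2" and "0 < p" and "p \<le> 1"
  shows
   "(measure_pmf.expectation (pair_pmf (perc_pmf M p n) (perc_pmf M p n))
       (\<lambda>(\<omega>1, \<omega>2). V1 (perc_D M n \<omega>1 \<inter> perc_D M n \<omega>2))
      = 1 - 2 * p ^ n + p ^ (2 * n))
   \<and> (measure_pmf.expectation (pair_pmf (perc_pmf M p n) (perc_pmf M p n))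
       (\<lambda>(\<omega>1, \<omega>2). V0 (perc_D M n \<omega>1 \<inter> perc_D M n \<omega>2))
      = 2 * (real M * p) ^ n * (1 - p * (real M - 1) / (real M - p) * (1 - (p / real M) ^ n))
        + 1 - 4 * p ^ n + 2 * p ^ (2 * n)
        + (real M * p\<^sup>2) ^ n * (- 1 + p\<^sup>2 * (real M - 1) / (real M - p\<^sup>2) * (1 - (p\<^sup>2 / real M) ^ n)))
   \<and> (measure_pmf.expectation (perc_pmf M p n) (\<lambda>\<omega>. V1 (perc_D M n \<omega>)) = 1 - p ^ n)
   \<and> (measure_pmf.expectation (perc_pmf M p n) (\<lambda>\<omega>. V0 (perc_D M n \<omega>))
      = (real M * p) ^ n * (1 - p * (real M - 1) / (real M - p) * (1 - (p / real M) ^ n))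
        + 1 - 2 * p ^ n)"
proof -
  have M: "0 < M" using assms(1) by simp
  have p: "0 \<le> p" "p \<le> 1" using assms by auto
  define X where "X = real M ^ n"
  define Y where "Y = p ^ n"
  have X0: "X > 0" unfolding X_def using M by simp
  have rX: "real (M ^ n) = X" unfolding X_def by (simp add: of_nat_power)
  have Mp: "real M - p > 0" using assms by simp
  have p2: "p\<^sup>2 \<le> 1" using p by (simp add: power_le_one)
  have Mp2: "real M - p\<^sup>2 > 0" using assms p2 by simp
  have rM1: "real (M - 1) = real M - 1" using M by (simp add: of_nat_diff)
  have Gp: "G p M n = (real M - 1) * p * (X - Y) / (real M - p)"
    using G_closed[OF assms(1), of p n] Mp unfolding X_def Y_def rM1 by simp
  have ePq: "(p\<^sup>2) ^ n = Y\<^sup>2"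
  proof -
    have "(p\<^sup>2) ^ n = p ^ (2 * n)" by (rule power_mult[symmetric])
    also have "\<dots> = p ^ (n * 2)" by (simp add: mult.commute)
    also have "\<dots> = Y\<^sup>2" unfolding Y_def by (rule power_mult)
    finally show ?thesis .
  qed
  have Gq: "G (p\<^sup>2) M n = (real M - 1) * p\<^sup>2 * (X - Y\<^sup>2) / (real M - p\<^sup>2)"
    using G_closed[OF assms(1), of "p\<^sup>2" n] Mp2 unfolding X_def[symmetric] ePq rM1 by simp
  have e1: "(real M * p) ^ n = X * Y" unfolding X_def Y_def by (simp add: power_mult_distrib)
  have e2: "(p / real M) ^ n = Y / X" unfolding X_def Y_def by (simp add: power_divide)
  have e3: "p ^ (2 * n) = Y\<^sup>2" using ePq by (simp add: power_mult)
  have e4: "(real M * p\<^sup>2) ^ n = X * Y\<^sup>2" unfolding power_mult_distrib ePq X_def ..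
  have e5: "(p\<^sup>2 / real M) ^ n = Y\<^sup>2 / X" unfolding power_divide ePq X_def ..
  define A where "A = p * (real M - 1) / (real M - p)"
  define B where "B = p\<^sup>2 * (real M - 1) / (real M - p\<^sup>2)"
  have GpA: "G p M n = A * (X - Y)" unfolding Gp A_def by simp
  have GqB: "G (p\<^sup>2) M n = B * (X - Y\<^sup>2)" unfolding Gq B_def by simp
  have f1: "X * Y * (1 - A * (1 - Y / X)) = Y * X - A * Y * (X - Y)"
    using X0 by (simp add: field_simps)
  have f2: "X * Y\<^sup>2 * (- 1 + B * (1 - Y\<^sup>2 / X)) = - X * Y\<^sup>2 + B * Y\<^sup>2 * (X - Y\<^sup>2)"
    using X0 by (simp add: field_simps)
  note E = E_V1_pair[OF M p, of n] E_V0_pair[OF M p, of n] E_V1_single[OF M p, of n] E_V0_single[OF M p, of n]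
  show ?thesis
    unfolding E rX GpA GqB e1 e2 e3 e4 e5 Y_def[symmetric] A_def[symmetric] B_def[symmetric]
  proof (intro conjI)
    show "(1 - Y)\<^sup>2 = 1 - 2 * Y + Y\<^sup>2" by (simp add: power2_eq_square algebra_simps)
    have "2 * (X * Y) * (1 - A * (1 - Y / X)) = 2 * (Y * X - A * Y * (X - Y))" using f1 by simp
    then show "2 * (1 - Y)\<^sup>2 + (X - 1) - 2 * Y * (A * (X - Y)) + Y\<^sup>2 * (B * (X - Y\<^sup>2)) - X * (1 - Y)\<^sup>2 =
      2 * (X * Y) * (1 - A * (1 - Y / X)) + 1 - 4 * Y + 2 * Y\<^sup>2 +
      X * Y\<^sup>2 * (- 1 + B * (1 - Y\<^sup>2 / X))"
      unfolding f2 by (simp add: power2_eq_square algebra_simps)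
    show "1 - Y = 1 - Y" ..
    show "2 * (1 - Y) + (X - 1) - Y * (A * (X - Y)) - X * (1 - Y) =
      X * Y * (1 - A * (1 - Y / X)) + 1 - 2 * Y"
      unfolding f1 by (simp add: algebra_simps)
  qed
qed


end
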